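(* Let $a,\epsilon,\kappa\in\mathbb{R}$ and let $p:\mathbb{R}\to\mathbb{R}$ be a $2\pi$-periodic function with zero mean. Consider the damped Hill equation $$\ddot{\theta} + 2\kappa\dot{\theta} + \big(a+\epsilon p(t)\big)\theta = 0,$$ and let $\Theta(t,0)$ denote its $2\times 2$ state transition matrix in the state $(\theta,\dot\theta)^{\mathrm T}$. Define the related undamped Hill equation $$\ddot{z} + \big(a-\kappa^2+\epsilon p(t)\big) z = 0,$$ with $2\times 2$ state transition matrix $\Phi(t,0;a,\epsilon)$ in the state $(z,\dot z)^{\mathrm T}$. If $$\big|\operatorname{tr}\,\Phi(2\pi,0;a,\epsilon)\big| > 2\cosh(2\pi\kappa),$$ then the damped Hill equation is unstable, i.e. its monodromy matrix $\Theta(2\pi,0)$ has an eigenvalue of modulus strictly greater than $1$.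
   Context: For a linear system $\dot x = A(t)x$ with $2\pi$-periodic $A$, the state transition matrix $\Theta(t,0)$ is the matrix solution of $\dot\Theta = A(t)\Theta$, $\Theta(0,0)=I$, so that $x(t)=\Theta(t,0)x(0)$; the monodromy matrix is $\Theta(2\pi,0)$. The system is called unstable when the monodromy matrix has an eigenvalue outside the closed unit disk. Here $\kappa$ is the viscous damping coefficient, $a$ the mean spring constant, and $\epsilon$ the parametric forcing amplitude. *)

theory Defs
  imports "HOL-Analysis.Analysis"
begin

text \<open>Companion (state-space) matrix of x'' + c x' + q(t) x = 0 in the state (x, x').\<close>
definition companion2 :: "real \<Rightarrow> real \<Rightarrow> real^2^2" where
  "companion2 c q = vector [vector [0, 1], vector [- q, - c]]"

definition is_state_transition :: "(real \<Rightarrow> real^2^2) \<Rightarrow> (real \<Rightarrow> real^2^2) \<Rightarrow> bool" where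
  "is_state_transition A Phi \<longleftrightarrow>
     Phi 0 = mat 1 \<and> (\<forall>t. (Phi has_vector_derivative (A t ** Phi t)) (at t))"

definition is_eigenvalue :: "real^'n^'n \<Rightarrow> complex \<Rightarrow> bool" where
  "is_eigenvalue M l \<longleftrightarrow>
     (\<exists>v :: complex^'n. v \<noteq> 0 \<and>
        (\<chi> i. \<Sum>j\<in>UNIV. complex_of_real (M $ i $ j) * v $ j) = l *s v)"

end

theory Submission
  imports Defs
begin

lemma comp_deriv:
  fixes X :: "real \<Rightarrow> real^2^2"
  assumes "(X has_vector_derivative D) (at t)"
  shows "((\<lambda>t. X t $ i $ j) has_real_derivative (D $ i $ j)) (at t)"
proof -
  have bl: "bounded_linear (\<lambda>M::real^2^2. M $ i $ j)"
    by (rule bounded_linear_compose[where f="\<lambda>x::real^2. x $ j" and g="\<lambda>M::real^2^2. M $ i"]) (rule bounded_linear_vec_nth)+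
  from bounded_linear.has_vector_derivative[OF bl assms] show ?thesis
    by (simp add: has_real_derivative_iff_has_vector_derivative)
qed

lemma comp_prod:
  "(companion2 c q ** X) $ 1 $ j = X $ 2 $ j"
  "(companion2 c q ** X) $ 2 $ j = - q * X $ 1 $ j - c * X $ 2 $ j"
  by (simp_all add: companion2_def matrix_matrix_mult_def sum_2)

lemma wronsk:
  fixes x y u v q :: "real \<Rightarrow> real" and c :: real
  assumes "\<And>t. (x has_real_derivative y t) (at t)"
    "\<And>t. (y has_real_derivative (- q t * x t - c * y t)) (at t)"
    "\<And>t. (u has_real_derivative v t) (at t)"
    "\<And>t. (v has_real_derivative (- q t * u t - c * v t)) (at t)"
  shows "x t * v t - y t * u t = exp (- c * t) * (x 0 * v 0 - y 0 * u 0)"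
proof -
  define g where "g s = exp (c * s) * (x s * v s - y s * u s)" for s
  have d: "(g has_real_derivative 0) (at s)" for s
  proof -
    define D where "D = c * exp (c * s) * (x s * v s - y s * u s) + exp (c * s) * ((y s * v s + x s * (- q s * u s - c * v s)) - ((- q s * x s - c * y s) * u s + y s * v s))"
    have "(g has_real_derivative D) (at s)"
      unfolding g_def
      by (auto intro!: derivative_eq_intros assms simp: D_def algebra_simps)
    moreover have "D = 0"
      by (simp add: D_def algebra_simps)
    ultimately show ?thesis by simp
  qed
  have "g t = g 0" using DERIV_isconst_all[of g] d by blast
  then have "exp (c * t) * (x t * v t - y t * u t) = x 0 * v 0 - y 0 * u 0" by (simp add: g_def)
  then show ?thesis by (simp add: exp_minus field_simps)
qed

lemma repr:
  fixes x1 y1 x2 y2 u v q :: "real \<Rightarrow> real" and c :: real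
  assumes "\<And>t. (x1 has_real_derivative y1 t) (at t)"
    "\<And>t. (y1 has_real_derivative (- q t * x1 t - c * y1 t)) (at t)"
    "\<And>t. (x2 has_real_derivative y2 t) (at t)"
    "\<And>t. (y2 has_real_derivative (- q t * x2 t - c * y2 t)) (at t)"
    "\<And>t. (u has_real_derivative v t) (at t)"
    "\<And>t. (v has_real_derivative (- q t * u t - c * v t)) (at t)"
    and i: "x1 0 = 1" "y1 0 = 0" "x2 0 = 0" "y2 0 = 1"
  shows "u t = u 0 * x1 t + v 0 * x2 t \<and> v t = u 0 * y1 t + v 0 * y2 t"
proof -
  have w12: "x1 t * y2 t - y1 t * x2 t = exp (- c * t)"
    using wronsk[of x1 y1 q c x2 y2 t] assms i by simp
  have wu2: "u t * y2 t - v t * x2 t = exp (- c * t) * u 0"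
    using wronsk[of u v q c x2 y2 t] assms i by simp
  have w1u: "x1 t * v t - y1 t * u t = exp (- c * t) * v 0"
    using wronsk[of x1 y1 q c u v t] assms i by simp
  have e: "exp (- c * t) \<noteq> 0" by simp
  have id1: "(x1 t * y2 t - y1 t * x2 t) * u t = (u t * y2 t - v t * x2 t) * x1 t + (x1 t * v t - y1 t * u t) * x2 t"
    by algebra
  have id2: "(x1 t * y2 t - y1 t * x2 t) * v t = (u t * y2 t - v t * x2 t) * y1 t + (x1 t * v t - y1 t * u t) * y2 t"
    by algebra
  have "exp (- c * t) * u t = exp (- c * t) * (u 0 * x1 t + v 0 * x2 t)"
    using id1 unfolding w12 wu2 w1u by (simp add: algebra_simps)
  moreover have "exp (- c * t) * v t = exp (- c * t) * (u 0 * y1 t + v 0 * y2 t)"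
    using id2 unfolding w12 wu2 w1u by (simp add: algebra_simps)
  ultimately show ?thesis using e by simp
qed

lemma eig2:
  fixes M :: "real^2^2" and l :: real
  assumes "l^2 - (M$1$1 + M$2$2) * l + (M$1$1 * M$2$2 - M$1$2 * M$2$1) = 0"
  shows "is_eigenvalue M (complex_of_real l)"
proof -
  have "\<exists>w1 w2. (w1 \<noteq> 0 \<or> w2 \<noteq> 0) \<and> M$1$1 * w1 + M$1$2 * w2 = l * w1 \<and> M$2$1 * w1 + M$2$2 * w2 = l * w2"
  proof (cases "M$1$2 = 0")
    case False
    show ?thesis
      by (rule exI[of _ "M$1$2"], rule exI[of _ "l - M$1$1"]) (use False assms in \<open>auto simp: algebra_simps power2_eq_square\<close>)
  next
    case True
    show ?thesis
    proof (cases "l - M$2$2 = 0 \<and> M$2$1 = 0")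
      case False
      show ?thesis
        by (rule exI[of _ "l - M$2$2"], rule exI[of _ "M$2$1"]) (use False True assms in \<open>auto simp: algebra_simps power2_eq_square\<close>)
    next
      case T2: True
      show ?thesis
        by (rule exI[of _ 0], rule exI[of _ 1]) (use T2 True in \<open>auto simp: algebra_simps\<close>)
    qed
  qed
  then obtain w1 w2 where w: "w1 \<noteq> 0 \<or> w2 \<noteq> 0" "M$1$1 * w1 + M$1$2 * w2 = l * w1" "M$2$1 * w1 + M$2$2 * w2 = l * w2"
    by blast
  define v :: "complex^2" where "v = vector [complex_of_real w1, complex_of_real w2]"
  have "v \<noteq> 0" using w(1) by (auto simp: v_def vec_eq_iff forall_2)
  moreover have "(\<chi> i. \<Sum>j\<in>UNIV. complex_of_real (M $ i $ j) * v $ j) = complex_of_real l *s v"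
  proof -
    have a: "complex_of_real (M$1$1) * complex_of_real w1 + complex_of_real (M$1$2) * complex_of_real w2 = complex_of_real l * complex_of_real w1"
      using arg_cong[OF w(2), of complex_of_real] by simp
    have b: "complex_of_real (M$2$1) * complex_of_real w1 + complex_of_real (M$2$2) * complex_of_real w2 = complex_of_real l * complex_of_real w2"
      using arg_cong[OF w(3), of complex_of_real] by simp
    show ?thesis using a b by (simp add: vec_eq_iff forall_2 sum_2 v_def)
  qed
  ultimately show ?thesis unfolding is_eigenvalue_def by blast
qed

lemma final_ineq:
  fixes s C :: real
  assumes tr: "\<bar>s\<bar> > 2 * cosh C"
  shows "exp (- C) * ((\<bar>s\<bar> + sqrt (s^2 - 4)) / 2) > 1"
proof -
  define m where "m = exp C"
  have m0: "m > 0" by (simp add: m_def)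
  have ch: "2 * cosh C = m + 1 / m" by (simp add: cosh_def m_def exp_minus field_simps)
  have sm: "\<bar>s\<bar> > m + 1/m" using tr ch by simp
  have "m * \<bar>s\<bar> > m * (m + 1/m)" using sm m0 by simp
  moreover have "m * (m + 1/m) = m^2 + 1" using m0 by (simp add: field_simps power2_eq_square)
  ultimately have ms: "m * \<bar>s\<bar> > m^2 + 1" by linarith
  have "sqrt (s^2 - 4) > 2 * m - \<bar>s\<bar>"
  proof (cases "2 * m - \<bar>s\<bar> < 0")
    case True
    have "\<bar>s\<bar> > 2" using tr cosh_real_ge_1[of C] by linarith
    then have "\<bar>s\<bar> * \<bar>s\<bar> > 2 * 2" using mult_strict_mono[of 2 "\<bar>s\<bar>" 2 "\<bar>s\<bar>"] by simp
    then have "s^2 - 4 \<ge> 0" by (simp add: power2_eq_square)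
    then have "sqrt (s^2 - 4) \<ge> 0" by simp
    then show ?thesis using True by linarith
  next
    case False
    have ex: "(2 * m - \<bar>s\<bar>)^2 = 4 * m^2 - 4 * (m * \<bar>s\<bar>) + s^2"
      by (simp add: power2_diff power2_abs power_mult_distrib)
    have "(2 * m - \<bar>s\<bar>)^2 < s^2 - 4" unfolding ex using ms by linarith
    then show ?thesis by (rule real_less_rsqrt)
  qed
  then have "\<bar>s\<bar> + sqrt (s^2 - 4) > 2 * m" by simp
  then have "(\<bar>s\<bar> + sqrt (s^2 - 4)) / 2 > m" by simp
  then have "exp (- C) * ((\<bar>s\<bar> + sqrt (s^2 - 4)) / 2) > exp (- C) * m" by simp
  moreover have "exp (- C) * m = 1" by (simp add: m_def exp_minus)
  ultimately show ?thesis by simp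
qed

theorem theorem3p1:
  fixes a \<epsilon> \<kappa> :: real and p :: "real \<Rightarrow> real"
    and Theta Phi :: "real \<Rightarrow> real^2^2"
  assumes p_cont: "continuous_on UNIV p"
    and p_per: "\<forall>t. p (t + 2 * pi) = p t"
    and p_mean: "integral {0..2 * pi} p = 0"
    and Theta: "is_state_transition (\<lambda>t. companion2 (2 * \<kappa>) (a + \<epsilon> * p t)) Theta"
    and Phi: "is_state_transition (\<lambda>t. companion2 0 (a - \<kappa>\<^sup>2 + \<epsilon> * p t)) Phi"
    and tr: "\<bar>trace (Phi (2 * pi))\<bar> > 2 * cosh (2 * pi * \<kappa>)"
  shows "\<exists>l. is_eigenvalue (Theta (2 * pi)) l \<and> cmod l > 1"
proof -
  define q where "q t = a + \<epsilon> * p t" for t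
  define r where "r t = a - \<kappa>\<^sup>2 + \<epsilon> * p t" for t
  have T0: "Theta 0 = mat 1" and TD: "\<And>t. (Theta has_vector_derivative (companion2 (2 * \<kappa>) (q t) ** Theta t)) (at t)"
    using Theta unfolding is_state_transition_def q_def by auto
  have P0: "Phi 0 = mat 1" and PD: "\<And>t. (Phi has_vector_derivative (companion2 0 (r t) ** Phi t)) (at t)"
    using Phi unfolding is_state_transition_def r_def by auto
  have dT1: "((\<lambda>t. Theta t $ 1 $ j) has_real_derivative Theta t $ 2 $ j) (at t)" for j t
    using comp_deriv[OF TD[of t], of 1 j] by (simp add: comp_prod)
  have dT2: "((\<lambda>t. Theta t $ 2 $ j) has_real_derivative (- q t * Theta t $ 1 $ j - 2 * \<kappa> * Theta t $ 2 $ j)) (at t)" for j t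
    using comp_deriv[OF TD[of t], of 2 j] by (simp add: comp_prod)
  have dP1: "((\<lambda>t. Phi t $ 1 $ j) has_real_derivative Phi t $ 2 $ j) (at t)" for j t
    using comp_deriv[OF PD[of t], of 1 j] by (simp add: comp_prod)
  have dP2: "((\<lambda>t. Phi t $ 2 $ j) has_real_derivative (- r t * Phi t $ 1 $ j - 0 * Phi t $ 2 $ j)) (at t)" for j t
    using comp_deriv[OF PD[of t], of 2 j] by (simp add: comp_prod)
  have dP2': "((\<lambda>t. Phi t $ 2 $ j) has_real_derivative (- r t * Phi t $ 1 $ j)) (at t)" for j t
    using dP2[of j t] by simp
  define u1 where "u1 t = exp (- \<kappa> * t) * (Phi t $ 1 $ 1 + \<kappa> * Phi t $ 1 $ 2)" for t
  define v1 where "v1 t = exp (- \<kappa> * t) * (Phi t $ 2 $ 1 + \<kappa> * Phi t $ 2 $ 2 - \<kappa> * Phi t $ 1 $ 1 - \<kappa>^2 * Phi t $ 1 $ 2)" for t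
  define u2 where "u2 t = exp (- \<kappa> * t) * Phi t $ 1 $ 2" for t
  define v2 where "v2 t = exp (- \<kappa> * t) * (Phi t $ 2 $ 2 - \<kappa> * Phi t $ 1 $ 2)" for t
  have du1: "(u1 has_real_derivative v1 t) (at t)" for t
    unfolding u1_def[abs_def] v1_def
    by (auto intro!: derivative_eq_intros dP1 dP2' simp: algebra_simps power2_eq_square)
  have dv1: "(v1 has_real_derivative (- q t * u1 t - 2 * \<kappa> * v1 t)) (at t)" for t
    unfolding u1_def v1_def[abs_def]
    by (auto intro!: derivative_eq_intros dP1 dP2' simp: algebra_simps power2_eq_square q_def r_def)
  have du2: "(u2 has_real_derivative v2 t) (at t)" for t
    unfolding u2_def[abs_def] v2_def
    by (auto intro!: derivative_eq_intros dP1 dP2' simp: algebra_simps power2_eq_square)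
  have dv2: "(v2 has_real_derivative (- q t * u2 t - 2 * \<kappa> * v2 t)) (at t)" for t
    unfolding u2_def v2_def[abs_def]
    by (auto intro!: derivative_eq_intros dP1 dP2' simp: algebra_simps power2_eq_square q_def r_def)
  have i0: "Theta 0 $ 1 $ 1 = 1" "Theta 0 $ 2 $ 1 = 0" "Theta 0 $ 1 $ 2 = 0" "Theta 0 $ 2 $ 2 = 1"
    "Phi 0 $ 1 $ 1 = 1" "Phi 0 $ 2 $ 1 = 0" "Phi 0 $ 1 $ 2 = 0" "Phi 0 $ 2 $ 2 = 1"
    using T0 P0 by (auto simp: mat_def)
  have uv0: "u1 0 = 1" "v1 0 = 0" "u2 0 = 0" "v2 0 = 1"
    using i0 by (simp_all add: u1_def v1_def u2_def v2_def)
  note R = repr[of "\<lambda>t. Theta t $ 1 $ 1" "\<lambda>t. Theta t $ 2 $ 1" q "2 * \<kappa>" "\<lambda>t. Theta t $ 1 $ 2" "\<lambda>t. Theta t $ 2 $ 2"]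
  have e1: "u1 t = Theta t $ 1 $ 1 \<and> v1 t = Theta t $ 2 $ 1" for t
    using R[of u1 v1 t, OF dT1 dT2 dT1 dT2 du1 dv1] i0 uv0 by simp
  have e2: "u2 t = Theta t $ 1 $ 2 \<and> v2 t = Theta t $ 2 $ 2" for t
    using R[of u2 v2 t, OF dT1 dT2 dT1 dT2 du2 dv2] i0 uv0 by simp
  have detP: "Phi t $ 1 $ 1 * Phi t $ 2 $ 2 - Phi t $ 2 $ 1 * Phi t $ 1 $ 2 = 1" for t
    using wronsk[of "\<lambda>t. Phi t $ 1 $ 1" "\<lambda>t. Phi t $ 2 $ 1" r 0 "\<lambda>t. Phi t $ 1 $ 2" "\<lambda>t. Phi t $ 2 $ 2" t, OF dP1 dP2 dP1 dP2] i0
    by simp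
  define T where "T = 2 * pi"
  define M where "M = Theta T"
  define s where "s = trace (Phi T)"
  define C where "C = 2 * pi * \<kappa>"
  have CT: "\<kappa> * T = C" by (simp add: C_def T_def)
  have s_def': "s = Phi T $ 1 $ 1 + Phi T $ 2 $ 2" by (simp add: s_def trace_def sum_2)
  have h: "M$1$1 = u1 T" "M$2$1 = v1 T" "M$1$2 = u2 T" "M$2$2 = v2 T"
    using e1[of T] e2[of T] by (simp_all add: M_def)
  have trM: "M$1$1 + M$2$2 = exp (- C) * s"
    unfolding h s_def' u1_def v2_def CT[symmetric] by (simp add: algebra_simps)
  have alg: "(E*(a11 + k*a12)) * (E*(a22 - k*a12)) - (E*a12) * (E*(a21 + k*a22 - k*a11 - k^2*a12)) = E^2 * (a11*a22 - a21*a12)"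
    for E a11 a12 a21 a22 k :: real
    by algebra
  have detM: "M$1$1 * M$2$2 - M$1$2 * M$2$1 = exp (- C) ^ 2"
    unfolding h u1_def v1_def u2_def v2_def
    using alg[of "exp (- \<kappa> * T)" "Phi T $ 1 $ 1" \<kappa> "Phi T $ 1 $ 2" "Phi T $ 2 $ 2" "Phi T $ 2 $ 1"] detP[of T] CT
    by simp
  have s4: "s^2 > 4"
  proof -
    have "\<bar>s\<bar> > 2" using tr cosh_real_ge_1[of C] unfolding s_def T_def C_def by linarith
    then have "\<bar>s\<bar> * \<bar>s\<bar> > 2 * 2" using mult_strict_mono[of 2 "\<bar>s\<bar>" 2 "\<bar>s\<bar>"] by simp
    then show ?thesis by (simp add: power2_eq_square)
  qed
  define D where "D = sqrt (s^2 - 4)"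
  have D2: "D^2 = s^2 - 4" using less_imp_le[OF s4] by (simp add: D_def)
  have D0: "D \<ge> 0" using less_imp_le[OF s4] by (simp add: D_def)
  define \<mu> where "\<mu> = (if s \<ge> 0 then (s + D) / 2 else (s - D) / 2)"
  have m1: "((s + D)/2)^2 - s*((s+D)/2) + 1 = (D^2 - s^2 + 4)/4"
    by (simp add: power2_eq_square field_simps)
  have m2: "((s - D)/2)^2 - s*((s-D)/2) + 1 = (D^2 - s^2 + 4)/4"
    by (simp add: power2_eq_square field_simps)
  have mu_eq: "\<mu>^2 - s * \<mu> + 1 = 0"
    using m1 m2 D2 unfolding \<mu>_def by (cases "s \<ge> 0") simp_all
  have mu_abs: "\<bar>\<mu>\<bar> = (\<bar>s\<bar> + D) / 2"
    using D0 by (auto simp: \<mu>_def)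
  define l where "l = exp (- C) * \<mu>"
  have "l^2 - (M$1$1 + M$2$2) * l + (M$1$1 * M$2$2 - M$1$2 * M$2$1) = exp (- C) ^ 2 * (\<mu>^2 - s * \<mu> + 1)"
    unfolding trM detM l_def by (simp add: algebra_simps power2_eq_square)
  then have "is_eigenvalue M (complex_of_real l)"
    using mu_eq by (intro eig2) simp
  moreover have "cmod (complex_of_real l) > 1"
  proof -
    have "cmod (complex_of_real l) = \<bar>l\<bar>" by (rule norm_of_real)
    also have "\<dots> = exp (- C) * \<bar>\<mu>\<bar>" by (simp add: l_def abs_mult)
    also have "\<dots> = exp (- C) * ((\<bar>s\<bar> + sqrt (s^2 - 4)) / 2)"
      using mu_abs by (simp add: D_def)
    also have "\<dots> > 1" using final_ineq[of C s] tr unfolding s_def T_def C_def by simp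
    finally show ?thesis .
  qed
  ultimately show ?thesis unfolding M_def T_def by blast
qed

end
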